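(* Let $q,q',n$ be integers with $q'\ge 2q+2$, $q>1$ and $n>1$. Let $S$ be an $\mathcal{OS}_q(n)$ of period $m$ with ring sequence $[s_0,\ldots,s_{m-1}]$ where $s_0=0$; for $x\in\mathbb{Z}_q$ let $x'$ denote the class in $\mathbb{Z}_{q'}$ of the integer in $\{0,\ldots,q-1\}$ representing $x$; define $t_i=(-1)^{i+m-1}s_i'$ if $s_i'\neq0$ and $t_i=(-1)^{i+m-1}q$ if $s_i'=0$; and let $U$ be the sequence over $\mathbb{Z}_{q'}$ of period $4m$ with ring sequence $[s_0',\ldots,s_{m-1}',-s_0',\ldots,-s_{m-1}',t_0,\ldots,t_{m-1},-t_0,\ldots,-t_{m-1}]$ (an $\mathcal{SOS}_{q'}(n)$ containing an even number of zeros in its ring sequence). Let $U'$ be obtained from $U$ by replacing half of the zeros in its ring sequence by $q+1$ and the other half by $q'-q-1$. Then $U'$ is a good $\mathcal{SOS}_{q'}(n)$ of the same period as $U$, and $w_{q'}(U')=0$.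
   Context: For a periodic sequence $S=(s_i)$ write $\mathbf{s}_n(i)=(s_i,\ldots,s_{i+n-1})$; $\mathbf{u}^R$ is the reverse of a tuple and $-\mathbf{u}$ its termwise negative. An $n$-window sequence of period $m$ satisfies $\mathbf{s}_n(i)=\mathbf{s}_n(j)\Rightarrow i\equiv j\pmod m$. An $\mathcal{OS}_q(n)$ is a $q$-ary $n$-window sequence with $\mathbf{s}_n(i)\neq\mathbf{s}_n(j)^R$ for all $i,j$; an $\mathcal{SOS}_q(n)$ is an $\mathcal{OS}_q(n)$ with also $\mathbf{s}_n(i)\neq-\mathbf{s}_n(j)^R$ for all $i,j$. Such a sequence is good if every run of consecutive $0$s has length at most $n-2$. The ring sequence of a sequence of period $m$ is one period. The weight $w(U)$ is the integer sum of one period with terms in $\{0,\ldots,q'-1\}$; $w_{q'}(U)=w(U)\bmod q'$. *)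

theory Defs
  imports Main
begin

text \<open>A periodic sequence of period m is represented by its ring sequence (one period),
  a list of length m; elements of Z_q are represented by integers in {0..q-1}.\<close>

definition win :: "int list \<Rightarrow> nat \<Rightarrow> nat \<Rightarrow> int list" where
  "win xs n i = map (\<lambda>j. xs ! ((i + j) mod length xs)) [0..<n]"

definition neg_mod :: "int \<Rightarrow> int list \<Rightarrow> int list" where
  "neg_mod q u = map (\<lambda>x. (- x) mod q) u"

definition n_window_seq :: "nat \<Rightarrow> int list \<Rightarrow> bool" where
  "n_window_seq n xs \<longleftrightarrow> xs \<noteq> [] \<and>
     (\<forall>i j. win xs n i = win xs n j \<longrightarrow> i mod length xs = j mod length xs)"

definition OS :: "int \<Rightarrow> nat \<Rightarrow> int list \<Rightarrow> bool" where
  "OS q n xs \<longleftrightarrow> set xs \<subseteq> {0..<q} \<and> n_window_seq n xs \<and>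
     (\<forall>i j. win xs n i \<noteq> rev (win xs n j))"

definition SOS :: "int \<Rightarrow> nat \<Rightarrow> int list \<Rightarrow> bool" where
  "SOS q n xs \<longleftrightarrow> OS q n xs \<and> (\<forall>i j. win xs n i \<noteq> neg_mod q (rev (win xs n j)))"

text \<open>good: every run of consecutive zeros has length at most n-2, i.e. no n-1
  cyclically consecutive zeros.\<close>
definition good :: "nat \<Rightarrow> int list \<Rightarrow> bool" where
  "good n xs \<longleftrightarrow> (\<forall>i. win xs (n - 1) i \<noteq> replicate (n - 1) 0)"

definition weight :: "int list \<Rightarrow> int" where
  "weight xs = sum_list xs"

definition weight_mod :: "int \<Rightarrow> int list \<Rightarrow> int" where
  "weight_mod q' xs = weight xs mod q'"

definition lift_seq :: "int \<Rightarrow> int list \<Rightarrow> int list" where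
  "lift_seq q' ss = map (\<lambda>x. x mod q') ss"

definition t_seq :: "int \<Rightarrow> int \<Rightarrow> int list \<Rightarrow> int list" where
  "t_seq q q' ss = map (\<lambda>i. let s' = (ss ! i) mod q'; sg = (-1::int) ^ (i + length ss - 1) in
        if s' \<noteq> 0 then (sg * s') mod q' else (sg * q) mod q') [0..<length ss]"

definition constrU :: "int \<Rightarrow> int \<Rightarrow> int list \<Rightarrow> int list" where
  "constrU q q' ss = lift_seq q' ss @ neg_mod q' (lift_seq q' ss) @ t_seq q q' ss
                      @ neg_mod q' (t_seq q q' ss)"

definition half_zero_replacement :: "int \<Rightarrow> int \<Rightarrow> int list \<Rightarrow> int list \<Rightarrow> bool" where
  "half_zero_replacement q q' U U' \<longleftrightarrow> length U' = length U \<and>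
     (\<exists>Z. Z \<subseteq> {k. k < length U \<and> U ! k = 0} \<and>
          2 * card Z = card {k. k < length U \<and> U ! k = 0} \<and>
          (\<forall>k < length U. U ! k \<noteq> 0 \<longrightarrow> U' ! k = U ! k) \<and>
          (\<forall>k \<in> Z. U' ! k = q + 1) \<and>
          (\<forall>k < length U. U ! k = 0 \<and> k \<notin> Z \<longrightarrow> U' ! k = q' - q - 1))"

end

theory Submission imports Defs begin

definition valG :: "int \<Rightarrow> int \<Rightarrow> int \<Rightarrow> bool \<Rightarrow> nat \<Rightarrow> int" where
"valG q q' a e b = (
   if b = 0 then a else if b = 1 then (if a = 0 then 0 else q' - a)
   else if b = 2 then (if a = 0 then (if e then q else q' - q) else (if e then a else q' - a))
   else (if a = 0 then (if e then q' - q else q) else (if e then q' - a else a)))"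

definition valU :: "int \<Rightarrow> int \<Rightarrow> int list \<Rightarrow> nat \<Rightarrow> nat \<Rightarrow> int" where
"valU q q' ss b r = valG q q' (ss!r) (even (r + length ss - 1)) b"

lemma pair_gen: assumes "0 \<le> a" "a < q" "q' \<ge> 2*q+2" "q > 1" "b < 4" "b' < 4" "b \<noteq> b'"
  and eq: "valG q q' a e b = valG q q' a e b'"
  shows "(a = 0 \<and> b + b' = 1) \<or> (a \<noteq> 0 \<and> e \<and> even (b + b'))
     \<or> (a \<noteq> 0 \<and> \<not> e \<and> b + b' = 3)"
proof -
  have "b = 0 \<or> b = 1 \<or> b = 2 \<or> b = 3" "b' = 0 \<or> b' = 1 \<or> b' = 2 \<or> b' = 3" using assms by auto
  then show ?thesis using assms unfolding valG_def
    by (elim disjE; cases "a = 0"; cases e; simp)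
qed

definition pif :: "int \<Rightarrow> int \<Rightarrow> int \<Rightarrow> int" where
 "pif q q' x = (if x < q then x else if x = q \<or> x = q' - q then 0 else q' - x)"

definition psif :: "int \<Rightarrow> int \<Rightarrow> int \<Rightarrow> int" where
 "psif q q' x = (if x = q + 1 \<or> x = q' - q - 1 then 0 else x)"

lemma win_len[simp]: "length (win xs n i) = n" by (simp add: win_def)
lemma win_nth: "j < n \<Longrightarrow> win xs n i ! j = xs ! ((i + j) mod length xs)"
  by (simp add: win_def)

lemma neg_mod_pos: "0 < x \<Longrightarrow> x < (p::int) \<Longrightarrow> (- x) mod p = p - x"
  by (simp add: zmod_zminus1_eq_if)

locale thm_ctx =
  fixes q q' :: int and n :: nat and ss :: "int list"
  assumes qq: "q' \<ge> 2 * q + 2" and q1: "q > 1" and n1: "n > 1"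
    and os: "OS q n ss" and s0: "ss ! 0 = 0"
begin

abbreviation "m \<equiv> length ss"
abbreviation "U \<equiv> constrU q q' ss"

lemma m_pos: "m > 0" using os by (auto simp: OS_def n_window_seq_def)

lemma ss_range: assumes "r < m" shows "0 \<le> ss!r \<and> ss!r < q"
proof -
  have "ss!r \<in> set ss" using assms by simp
  then show ?thesis using os unfolding OS_def by auto
qed

lemma lift_eq: "lift_seq q' ss = ss"
proof -
  have "\<forall>x\<in>set ss. x mod q' = x" using os qq q1 by (auto simp: OS_def subset_iff)
  then show ?thesis unfolding lift_seq_def by (simp add: map_idI)
qed

lemma lenU: "length U = 4 * m"
  by (simp add: constrU_def lift_eq neg_mod_def t_seq_def)

lemma U_nth: assumes k: "k < 4 * m" shows "U ! k = valU q q' ss (k div m) (k mod m)"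
proof -
  have mp: "m > 0" by (rule m_pos)
  define r where "r = k mod m"
  have r: "r < m" using mp r_def by simp
  have a: "0 \<le> ss!r" "ss!r < q" using ss_range[OF r] by auto
  have nt: "(-1::int) ^ (r + m - 1) = (if even (r + m - 1) then 1 else -1)" by simp
  have T: "t_seq q q' ss ! r = valU q q' ss 2 r"
    using r a qq q1 unfolding t_seq_def valU_def valG_def Let_def
    by (auto simp: nt neg_mod_pos)
  have T3: "(- (t_seq q q' ss ! r)) mod q' = valU q q' ss 3 r"
    using r a qq q1 unfolding T valU_def valG_def Let_def
    by (auto simp: neg_mod_pos)
  have B: "(- (ss ! r)) mod q' = valU q q' ss 1 r"
    using r a qq q1 unfolding valU_def valG_def Let_def
    by (auto simp: neg_mod_pos)
  have kr: "k mod m = r" by (simp add: r_def)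
  have lt: "length (t_seq q q' ss) = m" by (simp add: t_seq_def)
  consider "k < m" | "m \<le> k" "k < 2*m" | "2*m \<le> k" "k < 3*m" | "3*m \<le> k" by linarith
  then show ?thesis
  proof cases
    case 1
    then show ?thesis using r_def by (simp add: constrU_def lift_eq nth_append valU_def valG_def)
  next
    case 2
    then have "k div m = 1" "k - m = r" using r_def
      by (auto simp: div_nat_eqI  le_div_geq le_mod_geq)
    then show ?thesis using 2 B r kr by (simp add: constrU_def lift_eq nth_append neg_mod_def)
  next
    case 3
    then have "k div m = 2" "k - 2*m = r" using r_def
      by (auto simp: div_nat_eqI mult_2 le_mod_geq)
    moreover have "\<not> (k - m < m)" using 3 by simp
    ultimately show ?thesis using 3 T r lt kr by (simp add: constrU_def lift_eq nth_append neg_mod_def mult_2)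
  next
    case 4
    then have "k div m = 3" "k - 3*m = r" using r_def k
      by (auto simp: div_nat_eqI le_mod_geq)
    moreover have "\<not> (k - m < m)" "\<not> (k - (m + m) < m)" "k - (m + m + m) = r" using 4 calculation by auto
    ultimately show ?thesis using 4 T3 r lt kr by (simp add: constrU_def lift_eq nth_append neg_mod_def)
  qed
qed

lemma valU_props: assumes r: "r < m" and b: "b < 4"
  shows "0 \<le> valU q q' ss b r \<and> valU q q' ss b r < q'
     \<and> (valU q q' ss b r \<le> q \<or> q' - q \<le> valU q q' ss b r)
     \<and> pif q q' (valU q q' ss b r) = ss!r
     \<and> pif q q' ((- valU q q' ss b r) mod q') = ss!r
     \<and> (valU q q' ss b r = 0 \<longleftrightarrow> b < 2 \<and> ss!r = 0)"
proof -
  have a: "0 \<le> ss!r" "ss!r < q" using ss_range[OF r] by auto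
  have "b = 0 \<or> b = 1 \<or> b = 2 \<or> b = 3" using b by auto
  then show ?thesis using a qq q1 unfolding valU_def valG_def Let_def pif_def
    by (elim disjE; cases "ss!r = 0"; auto simp: neg_mod_pos)
qed

lemma U_props: assumes k: "k < 4 * m"
  shows "0 \<le> U!k \<and> U!k < q' \<and> (U!k \<le> q \<or> q' - q \<le> U!k)
     \<and> pif q q' (U!k) = ss!(k mod m) \<and> pif q q' ((- (U!k)) mod q') = ss!(k mod m)"
proof -
  have "k div m < 4" using k by (simp add: less_mult_imp_div_less)
  moreover have "k mod m < m" using m_pos by simp
  ultimately show ?thesis using valU_props U_nth[OF k] by metis
qed

lemma win_nthU: "jj < n \<Longrightarrow> win U n i ! jj = U ! ((i + jj) mod (4*m))"
  by (simp add: win_nth lenU)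

lemma pi_win: "map (pif q q') (win U n i) = win ss n i"
proof (rule nth_equalityI)
  fix jj assume "jj < length (map (pif q q') (win U n i))"
  then have jj: "jj < n" by simp
  have "(i + jj) mod (4*m) < 4 * m" using m_pos by simp
  then have "pif q q' (U ! ((i + jj) mod (4*m))) = ss ! ((i+jj) mod (4*m) mod m)"
    using U_props by blast
  also have "(i+jj) mod (4*m) mod m = (i+jj) mod m" by (simp add: mod_mod_cancel)
  finally show "map (pif q q') (win U n i) ! jj = win ss n i ! jj"
    using jj by (simp add: win_nthU win_nth lenU)
qed simp

lemma pi_negwin: "map (pif q q') (neg_mod q' (rev (win U n i))) = rev (win ss n i)"
proof (rule nth_equalityI)
  fix jj assume "jj < length (map (pif q q') (neg_mod q' (rev (win U n i))))"
  then have jj: "jj < n" by (simp add: neg_mod_def)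
  define jr where "jr = n - 1 - jj"
  have jr: "jr < n" using jj jr_def by simp
  have "(i + jr) mod (4*m) < 4 * m" using m_pos by simp
  then have "pif q q' ((- (U ! ((i + jr) mod (4*m)))) mod q') = ss ! ((i+jr) mod (4*m) mod m)"
    using U_props by blast
  also have "(i+jr) mod (4*m) mod m = (i+jr) mod m" by (simp add: mod_mod_cancel)
  finally show "map (pif q q') (neg_mod q' (rev (win U n i))) ! jj = rev (win ss n i) ! jj"
    using jj jr jr_def by (simp add: win_nthU win_nth neg_mod_def rev_nth lenU)
qed (simp add: neg_mod_def)

lemma U_rev: "win U n i \<noteq> rev (win U n j)"
proof
  assume "win U n i = rev (win U n j)"
  then have "map (pif q q') (win U n i) = rev (map (pif q q') (win U n j))" by (simp add: rev_map)
  then have "win ss n i = rev (win ss n j)" by (simp add: pi_win)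
  then show False using os by (auto simp: OS_def)
qed

lemma U_negrev: "win U n i \<noteq> neg_mod q' (rev (win U n j))"
proof
  assume "win U n i = neg_mod q' (rev (win U n j))"
  then have "map (pif q q') (win U n i) = map (pif q q') (neg_mod q' (rev (win U n j)))" by simp
  then have "win ss n i = rev (win ss n j)" by (simp add: pi_win pi_negwin)
  then show False using os by (auto simp: OS_def)
qed

lemma pair: assumes r: "r < m" and b: "b < 4" "b' < 4" "b \<noteq> b'"
  and eq: "valU q q' ss b r = valU q q' ss b' r"
  shows "(ss!r = 0 \<and> b + b' = 1) \<or> (ss!r \<noteq> 0 \<and> even (r + m - 1) \<and> even (b + b'))
     \<or> (ss!r \<noteq> 0 \<and> odd (r + m - 1) \<and> b + b' = 3)"
  using pair_gen[of "ss!r" q q' b b' "even (r + m - 1)"] ss_range[OF r] qq q1 b eq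
  unfolding valU_def by blast


lemma Z01: assumes r: "r < m"
  and H: "\<forall>jj<n. U!((r+jj) mod (4*m)) = U!((m+r+jj) mod (4*m))" shows False
proof (cases "r + n \<le> m")
  case True
  have z: "ss!(r+jj) = 0" if jj: "jj < n" for jj
  proof -
    have l1: "r+jj < m" using True jj n1 by simp
    have l2: "m + (r + jj) < 4 * m" using l1 by simp
    have "U!((r+jj) mod (4*m)) = U!(r+jj)" using l1 by simp
    also have "\<dots> = valU q q' ss 0 (r+jj)" using U_nth[of "r+jj"] l1 by simp
    finally have e1: "U!((r+jj) mod (4*m)) = valU q q' ss 0 (r+jj)" .
    have "U!((m+r+jj) mod (4*m)) = U!(m + (r+jj))" using l2 by (simp add: add.assoc)
    also have "\<dots> = valU q q' ss 1 (r+jj)"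
    proof -
      have "(m + (r+jj)) div m = 1" using l1 m_pos by (simp add: div_add_self1 div_less)
      then show ?thesis using U_nth[OF l2] l1 by simp
    qed
    finally have e2: "U!((m+r+jj) mod (4*m)) = valU q q' ss 1 (r+jj)" .
    have "valU q q' ss 0 (r+jj) = valU q q' ss 1 (r+jj)" using H jj e1 e2 by simp
    then show ?thesis using ss_range[OF l1] qq unfolding valU_def valG_def
      by (auto split: if_splits)
  qed
  have "win ss n r = replicate n 0"
    by (rule nth_equalityI) (use z True in \<open>auto simp: win_nth\<close>)
  then have "win ss n r = rev (win ss n r)" by simp
  then show False using os by (auto simp: OS_def)
next
  case False
  define jj where "jj = m - r"
  have jj: "jj < n" using False jj_def r n1 by simp
  have e1: "(r + jj) mod (4*m) = m" using jj_def r m_pos by simp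
  have e2: "(m + r + jj) mod (4*m) = 2*m" using jj_def r m_pos by simp
  have "U!m = valU q q' ss 1 0" using U_nth[of m] m_pos by simp
  moreover have "U!(2*m) = valU q q' ss 2 0" using U_nth[of "2*m"] m_pos by simp
  moreover have "valU q q' ss 1 0 = 0" "valU q q' ss 2 0 \<noteq> 0"
    using valU_props[of 0 1] valU_props[of 0 2] m_pos s0 by auto
  ultimately show False using H jj e1 e2 by auto
qed

lemma A_main: assumes k: "k < 4*m" "k' < 4*m" and km: "k mod m = k' mod m" and ne: "k \<noteq> k'"
  and H: "\<forall>jj<n. U!((k+jj) mod (4*m)) = U!((k'+jj) mod (4*m))" shows False
proof -
  define r b b' where "r = k mod m" and "b = k div m" and "b' = k' div m"
  have mp: "m > 0" by (rule m_pos)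
  have r: "r < m" using mp r_def by simp
  have kb: "k = b*m + r" "k' = b'*m + r" unfolding r_def b_def b'_def
    using div_mult_mod_eq[of k m] div_mult_mod_eq[of k' m] km by metis+
  have b4: "b < 4" "b' < 4" using k b_def b'_def by (simp_all add: less_mult_imp_div_less)
  have bne: "b \<noteq> b'" using ne kb by auto
  have H0: "valU q q' ss b r = valU q q' ss b' r"
    using H[rule_format, of 0] n1 U_nth[OF k(1)] U_nth[OF k(2)] k r_def b_def b'_def km by simp
  note P0 = pair[OF r b4 bne H0]
  show False
  proof (cases "r = m - 1")
    case True
    have blk: "U!((c*m + r + 1) mod (4*m)) = valU q q' ss ((c+1) mod 4) 0" if c: "c < 4" for c
    proof -
      have cm: "c*m + r + 1 = (c+1)*m" using True mp by simp
      show ?thesis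
      proof (cases "c < 3")
        case True
        then have "(c+1)*m < 4*m" using mp by simp
        then show ?thesis unfolding cm using U_nth[of "(c+1)*m"] mp True by simp
      next
        case False
        then have "c = 3" using c by simp
        then show ?thesis unfolding cm using U_nth[of 0] mp by simp
      qed
    qed
    have "valU q q' ss ((b+1) mod 4) 0 = valU q q' ss ((b'+1) mod 4) 0"
      using H[rule_format, of 1] n1 blk[OF b4(1)] blk[OF b4(2)] kb by (simp add: add.assoc)
    moreover have "(b+1) mod 4 \<noteq> (b'+1) mod 4"
    proof -
      have "b = 0 \<or> b = 1 \<or> b = 2 \<or> b = 3" "b' = 0 \<or> b' = 1 \<or> b' = 2 \<or> b' = 3" using b4 by auto
      then show ?thesis using bne by auto
    qed
    ultimately have "(b+1) mod 4 + (b'+1) mod 4 = 1"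
      using pair[of 0 "(b+1) mod 4" "(b'+1) mod 4"] mp s0 by auto
    moreover have "even (r + m - 1)" using True mp by simp
    moreover have "b = 0 \<or> b = 1 \<or> b = 2 \<or> b = 3" "b' = 0 \<or> b' = 1 \<or> b' = 2 \<or> b' = 3" using b4 by auto
    ultimately show False using P0 bne by auto
  next
    case False
    then have r1: "r + 1 < m" using r by simp
    have lt: "b*m + (r+1) < 4*m" if "b < 4" for b
    proof -
      have "b*m + (r+1) < b*m + m" using r1 by simp
      also have "\<dots> = (b+1)*m" by simp
      also have "\<dots> \<le> 4*m" using that by (intro mult_le_mono1) simp
      finally show ?thesis .
    qed
    have blk: "U!((b*m + r + 1) mod (4*m)) = valU q q' ss b (r+1)" if "b < 4" for b
    proof -
      have "(r+1 + b*m) div m = b + (r+1) div m" using mp by (intro div_mult_self1) simp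
      moreover have "(r+1) div m = 0" using r1 by simp
      ultimately have "(r+1 + b*m) div m = b" by simp
      moreover have "(r+1 + b*m) mod m = r+1" using mp r1 by simp
      ultimately have "(r+1 + b*m) div m = b" "(r+1 + b*m) mod m = r+1" by simp_all
      then have "(b*m + (r+1)) div m = b" "(b*m + (r+1)) mod m = r+1" by (simp_all add: add.commute)
      then show ?thesis using U_nth[OF lt[OF that]] lt[OF that] by (simp add: add.assoc)
    qed
    have H1: "valU q q' ss b (r+1) = valU q q' ss b' (r+1)"
      using H[rule_format, of 1] n1 blk[OF b4(1)] blk[OF b4(2)] kb by (simp add: add.assoc)
    note P1 = pair[OF r1 b4 bne H1]
    have par: "even (r + 1 + m - 1) \<longleftrightarrow> \<not> even (r + m - 1)" using mp by simp
    have ne3: "\<not> (even (b+b') \<and> b+b' = 3)" "\<not> (even (b+b') \<and> b+b' = 1)" by presburger+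
    have "b + b' = 1" using P0 P1 par ne3 by blast
    then have "(b = 0 \<and> b' = 1) \<or> (b = 1 \<and> b' = 0)" by auto
    then show False
    proof
      assume "b = 0 \<and> b' = 1"
      then show False using Z01[OF r] H kb by (simp add: add.commute add.left_commute)
    next
      assume "b = 1 \<and> b' = 0"
      then show False using Z01[OF r] H kb by (simp add: add.commute add.left_commute)
    qed
  qed
qed

lemma win_mod: "win xs n (i mod length xs) = win xs n i"
  by (simp add: win_def mod_add_left_eq)

lemma U_window: assumes eq: "win U n i = win U n j" shows "i mod (4*m) = j mod (4*m)"
proof (rule ccontr)
  assume ne: "i mod (4*m) \<noteq> j mod (4*m)"
  have "map (pif q q') (win U n i) = map (pif q q') (win U n j)" using eq by (rule arg_cong)
  then have "win ss n i = win ss n j" by (simp only: pi_win)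
  moreover have "n_window_seq n ss" using os unfolding OS_def by blast
  ultimately have ij: "i mod m = j mod m" unfolding n_window_seq_def by blast
  define k k' where "k = i mod (4*m)" and "k' = j mod (4*m)"
  have k: "k < 4*m" "k' < 4*m" using m_pos k_def k'_def by simp_all
  have dv: "m dvd 4*m" by simp
  have "k mod m = i mod m" unfolding k_def by (rule mod_mod_cancel[OF dv])
  moreover have "k' mod m = j mod m" unfolding k'_def by (rule mod_mod_cancel[OF dv])
  ultimately have km: "k mod m = k' mod m" using ij by simp
  have H: "\<forall>jj<n. U!((k+jj) mod (4*m)) = U!((k'+jj) mod (4*m))"
  proof (intro allI impI)
    fix jj assume jj: "jj < n"
    have a1: "(k+jj) mod (4*m) = (i+jj) mod (4*m)" unfolding k_def by (rule mod_add_left_eq)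
    have a2: "(k'+jj) mod (4*m) = (j+jj) mod (4*m)" unfolding k'_def by (rule mod_add_left_eq)
    have "U!((i+jj) mod (4*m)) = win U n i ! jj" using jj by (simp only: win_nthU)
    also have "\<dots> = win U n j ! jj" using eq by simp
    also have "\<dots> = U!((j+jj) mod (4*m))" using jj by (simp only: win_nthU)
    finally show "U!((k+jj) mod (4*m)) = U!((k'+jj) mod (4*m))" unfolding a1 a2 .
  qed
  have "k \<noteq> k'" using ne k_def k'_def by simp
  then show False using A_main[OF k km _ H] by blast
qed

end

lemma win_map: "xs \<noteq> [] \<Longrightarrow> win (map f xs) n i = map f (win xs n i)"
  by (simp add: win_def)

lemma psi_neg: assumes "0 \<le> x" "x < q'" "q' \<ge> 2*q+2" "q > 1"
  shows "psif q q' ((- x) mod q') = (- psif q q' x) mod q'"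
proof (cases "x = 0")
  case True then show ?thesis by (simp add: psif_def)
next
  case False
  then have x: "0 < x" using assms by simp
  have e: "(- x) mod q' = q' - x" using neg_mod_pos[OF x assms(2)] .
  show ?thesis using assms x unfolding e psif_def by (auto simp: neg_mod_pos)
qed

lemma neg_sum_dvd: "q' dvd (sum_list xs + sum_list (neg_mod q' xs))"
proof (induction xs)
  case Nil then show ?case by (simp add: neg_mod_def)
next
  case (Cons x xs)
  have "q' dvd (x + (- x) mod q')"
    by (metis mod_add_right_eq add.right_inverse mod_0 dvd_eq_mod_eq_0)
  then have "q' dvd ((x + (- x) mod q') + (sum_list xs + sum_list (neg_mod q' xs)))"
    using Cons by (rule dvd_add)
  then show ?case by (simp add: neg_mod_def algebra_simps)
qed

context thm_ctx
begin

lemma sumU_dvd: "q' dvd sum_list U"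
proof -
  have "sum_list U = (sum_list ss + sum_list (neg_mod q' ss))
     + (sum_list (t_seq q q' ss) + sum_list (neg_mod q' (t_seq q q' ss)))"
    by (simp add: constrU_def lift_eq)
  then show ?thesis using neg_sum_dvd by simp
qed

lemma final:
  assumes hz: "half_zero_replacement q q' U U'"
  shows "SOS q' n U' \<and> good n U' \<and> length U' = length U \<and> weight_mod q' U' = 0"
proof -
  define L where "L = 4*m"
  obtain Z where Zs: "Z \<subseteq> {k. k < length U \<and> U ! k = 0}"
    and Zc: "2 * card Z = card {k. k < length U \<and> U ! k = 0}"
    and nz: "\<forall>k < length U. U ! k \<noteq> 0 \<longrightarrow> U' ! k = U ! k"
    and zZ: "\<forall>k \<in> Z. U' ! k = q + 1"
    and zN: "\<forall>k < length U. U ! k = 0 \<and> k \<notin> Z \<longrightarrow> U' ! k = q' - q - 1"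
    and lenU': "length U' = length U"
    using hz unfolding half_zero_replacement_def by blast
  have lU: "length U = L" "length U' = L" using lenU lenU' L_def by simp_all
  have U'nth: "U'!k = (if U!k \<noteq> 0 then U!k else if k \<in> Z then q+1 else q'-q-1)" if "k < L" for k
    using nz zZ zN that lU by auto
  have Urng: "0 \<le> U!k \<and> U!k < q' \<and> (U!k \<le> q \<or> q' - q \<le> U!k)" if "k < L" for k
    using U_props that L_def by blast
  have U'rng: "0 \<le> U'!k \<and> U'!k < q' \<and> U'!k \<noteq> 0" if k: "k < L" for k
    using U'nth[OF k] Urng[OF k] qq q1 by auto
  have psiU: "psif q q' (U'!k) = U!k" if k: "k < L" for k
    using U'nth[OF k] Urng[OF k] qq q1 by (auto simp: psif_def)
  have mapU': "map (psif q q') U' = U"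
    by (rule nth_equalityI) (use lU psiU in auto)
  have setU': "set U' \<subseteq> {0..<q'}"
    using U'rng lU by (auto simp: in_set_conv_nth)
  have Lpos: "L > 0" using m_pos L_def by simp
  have U'ne: "U' \<noteq> []" using lU Lpos by auto
  have winset: "set (win U' n' i) \<subseteq> {0..<q'}" for n' i
    using setU' U'ne by (auto simp: win_def)
  have psiwin: "map (psif q q') (win U' n i) = win U n i" for i
    using mapU' win_map[OF U'ne, of "psif q q'" n i] by simp
  have psineg: "map (psif q q') (neg_mod q' w) = neg_mod q' (map (psif q q') w)"
    if "set w \<subseteq> {0..<q'}" for w
    unfolding neg_mod_def map_map
  proof (rule map_cong[OF refl])
    fix x assume "x \<in> set w"
    then have "0 \<le> x" "x < q'" using that by auto
    then show "(psif q q' \<circ> (\<lambda>x. - x mod q')) x = ((\<lambda>x. - x mod q') \<circ> psif q q') x"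
      using psi_neg[OF _ _ qq q1] by simp
  qed
  have sos: "SOS q' n U'"
    unfolding SOS_def OS_def n_window_seq_def
  proof (intro conjI allI impI)
    show "set U' \<subseteq> {0..<q'}" by (rule setU')
    show "U' \<noteq> []" by (rule U'ne)
  next
    fix i j assume "win U' n i = win U' n j"
    then have "map (psif q q') (win U' n i) = map (psif q q') (win U' n j)" by simp
    then have "win U n i = win U n j" by (simp only: psiwin)
    then have "i mod (4*m) = j mod (4*m)" by (rule U_window)
    then show "i mod length U' = j mod length U'" using lU L_def by simp
  next
    fix i j show "win U' n i \<noteq> rev (win U' n j)"
    proof
      assume "win U' n i = rev (win U' n j)"
      then have "map (psif q q') (win U' n i) = rev (map (psif q q') (win U' n j))" by (simp only: rev_map)
      then have "win U n i = rev (win U n j)" by (simp only: psiwin)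
      then show False using U_rev by blast
    qed
  next
    fix i j show "win U' n i \<noteq> neg_mod q' (rev (win U' n j))"
    proof
      assume "win U' n i = neg_mod q' (rev (win U' n j))"
      then have "map (psif q q') (win U' n i) = neg_mod q' (map (psif q q') (rev (win U' n j)))"
        using psineg[of "rev (win U' n j)"] winset[of n j] by (simp only: set_rev)
      then have "map (psif q q') (win U' n i) = neg_mod q' (rev (map (psif q q') (win U' n j)))"
        by (simp only: rev_map)
      then have "win U n i = neg_mod q' (rev (win U n j))" by (simp only: psiwin)
      then show False using U_negrev by blast
    qed
  qed
  have gd: "good n U'"
    unfolding good_def
  proof (intro allI notI)
    fix i assume h: "win U' (n - 1) i = replicate (n - 1) 0"
    have "win U' (n - 1) i ! 0 = U' ! (i mod L)" using n1 lU by (simp add: win_nth)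
    moreover have "i mod L < L" using Lpos by simp
    ultimately have "win U' (n - 1) i ! 0 \<noteq> 0" using U'rng by auto
    then show False using h n1 by simp
  qed
  define ZA where "ZA = {k. k < L \<and> U ! k = 0}"
  have ZA: "Z \<subseteq> ZA" "2 * card Z = card ZA" using Zs Zc lU ZA_def by auto
  have finZA: "finite ZA" unfolding ZA_def by simp
  have cZ: "card (ZA - Z) = card Z" using ZA finZA card_Diff_subset[of Z ZA] finite_subset[OF ZA(1) finZA] by simp
  have "sum_list U' = (\<Sum>k\<in>{0..<L}. U'!k)" using lU by (simp add: sum_list_sum_nth)
  also have "\<dots> = (\<Sum>k\<in>{0..<L}. U!k + ((if k \<in> Z then q+1 else 0) + (if k \<in> ZA - Z then q'-q-1 else 0)))"
    by (rule sum.cong) (use U'nth ZA ZA_def in auto)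
  also have "\<dots> = (\<Sum>k\<in>{0..<L}. U!k) + (\<Sum>k\<in>{0..<L}. (if k \<in> Z then q+1 else 0))
        + (\<Sum>k\<in>{0..<L}. (if k \<in> ZA - Z then q'-q-1 else 0))"
    by (simp add: sum.distrib)
  also have "(\<Sum>k\<in>{0..<L}. (if k \<in> Z then q+1 else 0)) = of_nat (card Z) * (q+1)"
  proof -
    have "{0..<L} \<inter> Z = Z" using ZA ZA_def by auto
    then show ?thesis by (simp add: sum.If_cases)
  qed
  also have "(\<Sum>k\<in>{0..<L}. (if k \<in> ZA - Z then q'-q-1 else 0)) = of_nat (card Z) * (q'-q-1)"
  proof -
    have ie: "{0..<L} \<inter> (ZA - Z) = ZA - Z" using ZA_def by auto
    have "(\<Sum>k\<in>{0..<L}. (if k \<in> ZA - Z then q'-q-1 else 0)) = (\<Sum>k\<in>{0..<L} \<inter> (ZA - Z). q'-q-1)"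
      by (rule sum.inter_restrict[symmetric]) simp
    also have "\<dots> = (\<Sum>k\<in>ZA - Z. q'-q-1)" by (simp only: ie)
    also have "\<dots> = of_nat (card (ZA - Z)) * (q'-q-1)" by simp
    finally show ?thesis by (simp only: cZ)
  qed
  also have "(\<Sum>k\<in>{0..<L}. U!k) = sum_list U" using lU by (simp add: sum_list_sum_nth)
  finally have "sum_list U' = sum_list U + of_nat (card Z) * q'" by (simp add: algebra_simps)
  then have wm: "weight_mod q' U' = 0" using sumU_dvd unfolding weight_mod_def weight_def by simp
  show ?thesis using sos gd lU wm by simp
qed

end

theorem theorem4p4:
  fixes q q' :: int and n :: nat and ss U' :: "int list"
  assumes "q' \<ge> 2 * q + 2" and "q > 1" and "n > 1"
    and "OS q n ss" and "ss ! 0 = 0"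
    and "half_zero_replacement q q' (constrU q q' ss) U'"
  shows "SOS q' n U' \<and> good n U' \<and> length U' = length (constrU q q' ss)
         \<and> weight_mod q' U' = 0"
proof -
  interpret thm_ctx q q' n ss using assms by unfold_locales
  show ?thesis using final[OF assms(6)] .
qed

end
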